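(* Under the hypotheses of the previous statement (with $P$ analytic in $\{\operatorname{Re}z>0\}$, $a>0$, $|P(z)|<M(\delta)e^{-a|z|}$ on $S(-\tfrac{\pi}{2}+\delta,\tfrac{\pi}{2}-\delta)$ for each $\delta\in(0,\tfrac{\pi}{2})$), let $F$ be the entire function that coincides with $F_\theta(t)=\int_{\arg z=\theta}e^{zt}P(z)\,dz$ on $\Pi_{\theta,a}$ for every $\theta\in(-\tfrac{\pi}{2},\tfrac{\pi}{2})$. Then for every $\delta\in(0,\tfrac{\pi}{2})$, $$|F(t)|\le \frac{2M(\delta)}{a}\quad\text{for all } t\in \overline{\Pi_{\pi/2-\delta,a/2}}\cup\overline{\Pi_{-\pi/2+\delta,a/2}},$$ i.e. outside the open sector with apex $\frac{a}{2\sin\delta}$ on the positive real axis, symmetric about the real axis, with half-opening $\delta$, containing $(\frac{a}{2\sin\delta},+\infty)$. In particular $|F(|t|e^{\pm i\delta})|\le 2M(\delta)/a$ for all $t$. Moreover $F(t)\to0$ as $t\to-\infty$ along the real axis.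
   Context: For $\alpha<\beta$, $S(\alpha,\beta)=\{z\in\mathbb{C}:0<|z|<\infty,\ \alpha<\arg z<\beta\}$. For $\theta\in(-\tfrac{\pi}{2},\tfrac{\pi}{2})$ and $c>0$, $\Pi_{\theta,c}=\{t=\sigma+i\tau:\ \sigma\cos\theta-\tau\sin\theta<c\}$, and $\overline{\Pi_{\theta,c}}$ is its closure. *)

theory Defs
  imports "HOL-Analysis.Analysis"
begin

text \<open>Open sector S(alpha,beta) = {z : 0 < |z| < infinity, alpha < arg z < beta}
  (principal argument, suitable for -pi < alpha < beta <= pi).\<close>
definition sector :: "real \<Rightarrow> real \<Rightarrow> complex set" where
  "sector \<alpha> \<beta> = {z. z \<noteq> 0 \<and> \<alpha> < Arg z \<and> Arg z < \<beta>}"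

definition halfplane :: "real \<Rightarrow> real \<Rightarrow> complex set" where
  "halfplane \<theta> c = {t. Re t * cos \<theta> - Im t * sin \<theta> < c}"

text \<open>F_theta(t) = integral over the ray arg z = theta (from 0 to infinity) of e^{zt} P(z) dz,
  parametrised by z = r e^{i theta}, dz = e^{i theta} dr.\<close>
definition ray_laplace :: "(complex \<Rightarrow> complex) \<Rightarrow> real \<Rightarrow> complex \<Rightarrow> complex" where
  "ray_laplace P \<theta> t =
     integral {0<..} (\<lambda>r::real. exp (of_real r * cis \<theta> * t) * P (of_real r * cis \<theta>) * cis \<theta>)"

end

theory Submission
  imports Defs "HOL-Real_Asymp.Real_Asymp"
begin

lemma key:
  fixes P :: "complex \<Rightarrow> complex"
  assumes K: "K \<ge> 0" and bP: "\<And>r. r > 0 \<Longrightarrow> cmod (P (of_real r * cis \<theta>)) \<le> K * exp (- a * r)"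
    and hb: "Re (cis \<theta> * t) \<le> b" and ba: "b < a"
  shows "cmod (ray_laplace P \<theta> t) \<le> K / (a - b)"
proof (cases "(\<lambda>r::real. exp (of_real r * cis \<theta> * t) * P (of_real r * cis \<theta>) * cis \<theta>) integrable_on {0<..}")
  case False then show ?thesis using K ba by (simp add: ray_laplace_def not_integrable_integral)
next
  case True
  have g0: "((\<lambda>r. K * exp (-(a-b)*r)) has_integral K * (exp (-(a-b)*0)/(a-b))) {0..}"
    by (intro has_integral_mult_right has_integral_exp_minus_to_infinity) (use ba in simp)
  have g: "((\<lambda>r. K * exp (-(a-b)*r)) has_integral K/(a-b)) {0<..}"
  proof -
    have n: "negligible {x \<in> S - T. f x \<noteq> 0}" if "S - T \<subseteq> {0::real}" for S T and f :: "real \<Rightarrow> real"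
      using negligible_subset[of "{0::real}"] that by (metis (no_types, lifting) Diff_iff mem_Collect_eq negligible_insert negligible_empty subset_iff)
    have "((\<lambda>r. K * exp (-(a-b)*r)) has_integral K/(a-b)) {0..} \<longleftrightarrow> ((\<lambda>r. K * exp (-(a-b)*r)) has_integral K/(a-b)) {0<..}"
      by (rule has_integral_spike_set_eq) (rule n; auto)+
    then show ?thesis using g0 by simp
  qed
  have "cmod (integral {0<..} (\<lambda>r::real. exp (of_real r * cis \<theta> * t) * P (of_real r * cis \<theta>) * cis \<theta>))
      \<le> integral {0<..} (\<lambda>r. K * exp (-(a-b)*r))"
  proof (rule integral_norm_bound_integral[OF True has_integral_integrable[OF g]])
    fix r :: real assume r: "r \<in> {0<..}"
    have "cmod (exp (of_real r * cis \<theta> * t) * P (of_real r * cis \<theta>) * cis \<theta>)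
       = exp (r * Re (cis \<theta> * t)) * cmod (P (of_real r * cis \<theta>))"
      by (simp add: norm_mult mult.assoc)
    also have "\<dots> \<le> exp (r * b) * (K * exp (- a * r))"
      using r hb by (intro mult_mono bP) auto
    also have "\<dots> = K * exp (-(a-b)*r)"
      by (simp add: exp_add[symmetric] algebra_simps)
    finally show "cmod (exp (of_real r * cis \<theta> * t) * P (of_real r * cis \<theta>) * cis \<theta>) \<le> K * exp (-(a-b)*r)" .
  qed
  then show ?thesis using integral_unique[OF g] by (simp add: ray_laplace_def)
qed


lemma closed_sector_bound:
  fixes P :: "complex \<Rightarrow> complex"
  assumes holP: "P holomorphic_on {z. Re z > 0}"
    and bound: "\<And>z. z \<in> sector (-pi/2 + \<delta>) (pi/2 - \<delta>) \<Longrightarrow> cmod (P z) < M * exp (- a * cmod z)"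
    and d: "\<delta> \<in> {0<..<pi/2}" and r: "r > 0" and phi: "\<phi> \<in> {-pi/2 + \<delta>..pi/2 - \<delta>}"
  shows "cmod (P (of_real r * cis \<phi>)) \<le> M * exp (- a * r)"
proof -
  let ?f = "\<lambda>\<phi>. cmod (P (of_real r * cis \<phi>))"
  have cl: "closure {-pi/2 + \<delta><..<pi/2 - \<delta>} = {-pi/2 + \<delta>..pi/2 - \<delta>}"
    using d by (intro closure_greaterThanLessThan) auto
  have "continuous_on {-pi/2 + \<delta>..pi/2 - \<delta>} (\<lambda>\<phi>. P (of_real r * cis \<phi>))"
  proof (rule continuous_on_compose2[OF holomorphic_on_imp_continuous_on[OF holP]])
    show "continuous_on {-pi/2 + \<delta>..pi/2 - \<delta>} (\<lambda>\<phi>. of_real r * cis \<phi>)"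
      by (intro continuous_intros)
    show "(\<lambda>\<phi>. of_real r * cis \<phi>) ` {-pi/2 + \<delta>..pi/2 - \<delta>} \<subseteq> {z. Re z > 0}"
      using d r by (auto intro!: mult_pos_pos cos_gt_zero_pi)
  qed
  then have cont: "continuous_on (closure {-pi/2 + \<delta><..<pi/2 - \<delta>}) ?f"
    unfolding cl by (intro continuous_intros)
  show ?thesis
  proof (rule continuous_le_on_closure[OF cont])
    show "\<phi> \<in> closure {-pi/2 + \<delta><..<pi/2 - \<delta>}" using phi cl by simp
    fix x assume x: "x \<in> {-pi/2 + \<delta><..<pi/2 - \<delta>}"
    have "Arg (of_real r * cis x) = x"
      using r x d by (simp add: Arg_cis)
    then have "of_real r * cis x \<in> sector (-pi/2 + \<delta>) (pi/2 - \<delta>)"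
      using x r by (auto simp: sector_def)
    then have "?f x < M * exp (- a * cmod (of_real r * cis x))" by (rule bound)
    then show "?f x \<le> M * exp (- a * r)" using r by (simp add: norm_mult)
  qed
qed

lemma M_nonneg:
  assumes bound: "\<And>z. z \<in> sector (-pi/2 + \<delta>) (pi/2 - \<delta>) \<Longrightarrow> cmod (P z) < M * exp (- a * cmod z)"
    and d: "\<delta> \<in> {0<..<pi/2}"
  shows "M \<ge> 0"
proof -
  have "(1::complex) \<in> sector (-pi/2 + \<delta>) (pi/2 - \<delta>)" using d by (auto simp: sector_def)
  from bound[OF this] have "0 < M * exp (- a)" using norm_ge_zero[of "P 1"] by (simp del: norm_ge_zero)
  then show ?thesis by (simp add: zero_less_mult_iff)
qed

theorem mainTheorem6:
  fixes P F :: "complex \<Rightarrow> complex" and M :: "real \<Rightarrow> real" and a :: real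
  assumes holP: "P holomorphic_on {z. Re z > 0}"
    and apos: "a > 0"
    and bound: "\<And>\<delta> z. \<delta> \<in> {0<..<pi/2} \<Longrightarrow> z \<in> sector (-pi/2 + \<delta>) (pi/2 - \<delta>) \<Longrightarrow>
                  cmod (P z) < M \<delta> * exp (- a * cmod z)"
    and entF: "F holomorphic_on UNIV"
    and coincide: "\<And>\<theta> t. \<theta> \<in> {-pi/2<..<pi/2} \<Longrightarrow> t \<in> halfplane \<theta> a \<Longrightarrow>
                  F t = ray_laplace P \<theta> t"
  shows "(\<forall>\<delta>\<in>{0<..<pi/2}. \<forall>t \<in> closure (halfplane (pi/2 - \<delta>) (a/2))
                                    \<union> closure (halfplane (-pi/2 + \<delta>) (a/2)).
            cmod (F t) \<le> 2 * M \<delta> / a)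
       \<and> (\<forall>\<delta>\<in>{0<..<pi/2}. \<forall>t::complex.
            cmod (F (of_real (cmod t) * cis \<delta>)) \<le> 2 * M \<delta> / a \<and>
            cmod (F (of_real (cmod t) * cis (- \<delta>))) \<le> 2 * M \<delta> / a)
       \<and> ((\<lambda>x::real. F (of_real x)) \<longlongrightarrow> 0) at_bot"
proof -
  have clo: "closure (halfplane \<theta> c) \<subseteq> {t. Re (cis \<theta> * t) \<le> c}" for \<theta> c
  proof (rule closure_minimal)
    show "halfplane \<theta> c \<subseteq> {t. Re (cis \<theta> * t) \<le> c}" by (auto simp: halfplane_def algebra_simps)
    show "closed {t. Re (cis \<theta> * t) \<le> c}"
      by (intro closed_Collect_le continuous_intros)
  qed
  have ray: "cmod (F t) \<le> 2 * M \<delta> / a"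
    if d: "\<delta> \<in> {0<..<pi/2}" and th: "\<theta> \<in> {-pi/2 + \<delta>..pi/2 - \<delta>}" and "\<theta> \<in> {-pi/2<..<pi/2}"
      and t: "Re (cis \<theta> * t) \<le> a/2" for \<delta> \<theta> t
  proof -
    have "t \<in> halfplane \<theta> a" using t apos by (auto simp: halfplane_def algebra_simps)
    then have "F t = ray_laplace P \<theta> t" using coincide that by blast
    also have "cmod \<dots> \<le> M \<delta> / (a - a/2)"
    proof (rule key[OF M_nonneg[OF bound[OF d] d] _ t])
      show "\<And>r. 0 < r \<Longrightarrow> cmod (P (complex_of_real r * cis \<theta>)) \<le> M \<delta> * exp (- a * r)"
        using closed_sector_bound[OF holP bound[OF d] d _ th] by blast
    qed (use apos in auto)
    also have "M \<delta> / (a - a/2) = 2 * M \<delta> / a" by simp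
    finally show ?thesis .
  qed
  have P1: "\<forall>\<delta>\<in>{0<..<pi/2}. \<forall>t \<in> closure (halfplane (pi/2 - \<delta>) (a/2))
                                    \<union> closure (halfplane (-pi/2 + \<delta>) (a/2)).
            cmod (F t) \<le> 2 * M \<delta> / a"
  proof (intro ballI)
    fix \<delta> t assume d: "\<delta> \<in> {0<..<pi/2}" and
      t: "t \<in> closure (halfplane (pi/2 - \<delta>) (a/2)) \<union> closure (halfplane (-pi/2 + \<delta>) (a/2))"
    from t show "cmod (F t) \<le> 2 * M \<delta> / a"
    proof
      assume "t \<in> closure (halfplane (pi/2 - \<delta>) (a/2))"
      then have "Re (cis (pi/2 - \<delta>) * t) \<le> a/2" using clo by blast
      then show ?thesis using d by (intro ray[OF d, of "pi/2 - \<delta>"]) auto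
    next
      assume "t \<in> closure (halfplane (-pi/2 + \<delta>) (a/2))"
      then have "Re (cis (-pi/2 + \<delta>) * t) \<le> a/2" using clo by blast
      then show ?thesis using d by (intro ray[OF d, of "-pi/2 + \<delta>"]) auto
    qed
  qed
  have P2: "\<forall>\<delta>\<in>{0<..<pi/2}. \<forall>t::complex.
            cmod (F (of_real (cmod t) * cis \<delta>)) \<le> 2 * M \<delta> / a \<and>
            cmod (F (of_real (cmod t) * cis (- \<delta>))) \<le> 2 * M \<delta> / a"
  proof (intro ballI allI conjI)
    fix \<delta> and t :: complex assume d: "\<delta> \<in> {0<..<pi/2}"
    have "of_real (cmod t) * cis \<delta> \<in> halfplane (pi/2 - \<delta>) (a/2)"
      using apos by (simp add: halfplane_def cos_diff sin_diff)
    then show "cmod (F (of_real (cmod t) * cis \<delta>)) \<le> 2 * M \<delta> / a"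
      using P1 d closure_subset by blast
    have "Re (of_real (cmod t) * cis (-\<delta>)) * cos (-pi/2 + \<delta>) - Im (of_real (cmod t) * cis (-\<delta>)) * sin (-pi/2 + \<delta>) = 0"
      by (simp add: cos_add sin_add cos_diff sin_diff)
    then have "of_real (cmod t) * cis (-\<delta>) \<in> halfplane (-pi/2 + \<delta>) (a/2)"
      using apos unfolding halfplane_def by simp
    then show "cmod (F (of_real (cmod t) * cis (-\<delta>))) \<le> 2 * M \<delta> / a"
      using P1 d closure_subset by blast
  qed
  define K where "K = M (pi/4)"
  have d4: "pi/4 \<in> {0<..<pi/2}" by auto
  have K0: "K \<ge> 0" unfolding K_def by (rule M_nonneg[OF bound[OF d4] d4])
  have ev: "eventually (\<lambda>x::real. norm (F (of_real x)) \<le> K / (a - x)) at_bot"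
    using eventually_le_at_bot[of 0]
  proof (rule eventually_mono)
    fix x :: real assume x: "x \<le> 0"
    have "of_real x \<in> halfplane 0 a" using x apos by (simp add: halfplane_def)
    then have "F (of_real x) = ray_laplace P 0 (of_real x)" using coincide by auto
    also have "cmod \<dots> \<le> K / (a - x)"
    proof (rule key[OF K0])
      fix r :: real assume r: "0 < r"
      have "complex_of_real r * cis 0 \<in> sector (-pi/2 + pi/4) (pi/2 - pi/4)"
        using r by (simp add: sector_def)
      from bound[OF d4 this] r show "cmod (P (complex_of_real r * cis 0)) \<le> K * exp (- a * r)"
        by (simp add: K_def)
    qed (use x apos in auto)
    finally show "norm (F (of_real x)) \<le> K / (a - x)" .
  qed
  have lim: "((\<lambda>x::real. K / (a - x)) \<longlongrightarrow> 0) at_bot" by real_asymp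
  have P3: "((\<lambda>x::real. F (of_real x)) \<longlongrightarrow> 0) at_bot"
    by (rule Lim_null_comparison[OF ev lim])
  show ?thesis using P1 P2 P3 by blast
qed

end
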